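(* Let $S>0$, $\zeta\in\{0,1\}$, $\phi\in\mathbb{R}$ and let $(u_n)_{n\in\mathbb{N}}$ be the $\phi$-market impact scenario defined below. (a) If $\phi\ge 1$, then $(u_n)$ is not admissible from a trading perspective. (b) If $\phi\in(-1,1)$, then $(u_n)$ is admissible from a trading perspective. (c) If $\phi\le -1$ and for every $x\in\mathbb{R}$ the sequence $(s_n(x))_{n\in\mathbb{N}}$ is bounded, then $(u_n)$ is admissible from a trading perspective. In particular, under the standing assumption that $(s_n(x))_{n}$ is bounded for every $x$ whenever $\phi\le -1$, the scenario is admissible if and only if $\phi\in(-\infty,1)$.
   Context: Fix $S>0$, $\zeta\in\{0,1\}$ and $\phi\in\mathbb{R}$. For $a,b\in\mathbb{R}$ write $a\vee b=\max(a,b)$. The $\phi$-market impact scenario starting from $x\in\mathbb{R}$ is the sequence of real-valued functions $(u_n)_{n\in\mathbb{N}}$ defined by $u_0(x)=x\vee(-S)$ and, for all $n\in\mathbb{N}$, $u_{n+1}(x)=\Big(\phi\big(1+\tfrac{s_n(x)}{S}\big)^{1+\zeta}u_n(x)\Big)\vee\big(-s_n(x)-S\big)$, where $s_n(x)=\sum_{k=0}^n u_k(x)$. The scenario is called admissible from a trading perspective if there exists $R>0$ such that for every $x\in(-R,R)$ the series $\sum_{n\ge0}u_n(x)$ converges. *)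

theory Defs
  imports "HOL-Analysis.Analysis"
begin

fun mis :: "real \<Rightarrow> nat \<Rightarrow> real \<Rightarrow> real \<Rightarrow> nat \<Rightarrow> real \<times> real" where
  "mis S zeta phi x 0 = (max x (-S), max x (-S))"
| "mis S zeta phi x (Suc n) =
     (let u = fst (mis S zeta phi x n); s = snd (mis S zeta phi x n);
          u' = max (phi * (1 + s / S) ^ (1 + zeta) * u) (- s - S)
      in (u', s + u'))"

definition mi_u :: "real \<Rightarrow> nat \<Rightarrow> real \<Rightarrow> nat \<Rightarrow> real \<Rightarrow> real" where
  "mi_u S zeta phi n x = fst (mis S zeta phi x n)"

definition mi_s :: "real \<Rightarrow> nat \<Rightarrow> real \<Rightarrow> nat \<Rightarrow> real \<Rightarrow> real" where
  "mi_s S zeta phi n x = (\<Sum>k\<le>n. mi_u S zeta phi k x)"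

definition admissible :: "real \<Rightarrow> nat \<Rightarrow> real \<Rightarrow> bool" where
  "admissible S zeta phi \<longleftrightarrow>
     (\<exists>R>0. \<forall>x. -R < x \<and> x < R \<longrightarrow> summable (\<lambda>n. mi_u S zeta phi n x))"

lemma mi_u_0: "mi_u S zeta phi 0 x = max x (-S)"
  by (simp add: mi_u_def)

lemma mis_snd: "snd (mis S zeta phi x n) = mi_s S zeta phi n x"
  by (induction n) (auto simp: mi_s_def mi_u_def Let_def)

lemma mi_u_Suc: "mi_u S zeta phi (Suc n) x =
   max (phi * (1 + mi_s S zeta phi n x / S) ^ (1 + zeta) * mi_u S zeta phi n x)
       (- mi_s S zeta phi n x - S)"
  by (simp add: mi_u_def Let_def mis_snd[symmetric])

end

theory Submission
  imports Defs
begin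

lemma LIMSEQ_even_odd':
  fixes X :: "nat \<Rightarrow> real"
  assumes e: "(\<lambda>k. X (2*k)) \<longlonglongrightarrow> L" and o: "(\<lambda>k. X (2*k+1)) \<longlonglongrightarrow> L"
  shows "X \<longlonglongrightarrow> L"
proof (rule LIMSEQ_I)
  fix r :: real assume r: "0 < r"
  obtain N1 where N1: "\<And>k. k \<ge> N1 \<Longrightarrow> norm (X (2*k) - L) < r" using LIMSEQ_D[OF e r] by blast
  obtain N2 where N2: "\<And>k. k \<ge> N2 \<Longrightarrow> norm (X (2*k+1) - L) < r" using LIMSEQ_D[OF o r] by blast
  show "\<exists>no. \<forall>n\<ge>no. norm (X n - L) < r"
  proof (intro exI allI impI)
    fix n assume n: "n \<ge> 2 * max N1 N2"
    show "norm (X n - L) < r"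
    proof (cases "even n")
      case True
      then obtain k where k: "n = 2*k" by blast
      with n have "k \<ge> N1" by auto
      with N1 k show ?thesis by simp
    next
      case False
      then obtain k where k: "n = 2*k+1" using oddE by blast
      with n have "k \<ge> N2" by auto
      with N2 k show ?thesis by simp
    qed
  qed
qed

lemma ev_dec_conv:
  fixes X :: "nat \<Rightarrow> real"
  assumes "\<And>j. j \<ge> k \<Longrightarrow> X (Suc j) \<le> X j" and "\<And>j. B \<le> X j"
  shows "convergent X"
proof -
  have "decseq (\<lambda>j. X (j + k))"
    by (rule decseq_SucI) (use assms(1) in auto)
  then obtain L where "(\<lambda>j. X (j + k)) \<longlonglongrightarrow> L"
    using decseq_convergent[of "\<lambda>j. X (j + k)" B] assms(2) by blast
  then show ?thesis using LIMSEQ_offset convergent_def by blast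
qed

lemma ev_inc_conv:
  fixes X :: "nat \<Rightarrow> real"
  assumes "\<And>j. j \<ge> k \<Longrightarrow> X j \<le> X (Suc j)" and "\<And>j. X j \<le> B"
  shows "convergent X"
proof -
  have "incseq (\<lambda>j. X (j + k))"
    by (rule incseq_SucI) (use assms(1) in auto)
  then obtain L where "(\<lambda>j. X (j + k)) \<longlonglongrightarrow> L"
    using incseq_convergent[of "\<lambda>j. X (j + k)" B] assms(2) by blast
  then show ?thesis using LIMSEQ_offset convergent_def by blast
qed

lemma core_conv:
  fixes a v :: "nat \<Rightarrow> real" and b M :: real and p :: nat
  assumes b: "b \<ge> 1" and p: "p \<ge> 1" and a0: "a 0 \<ge> 0" and v0: "v 0 \<ge> 0"
    and ra: "\<And>n. a (Suc n) = a n + v (Suc n)"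
    and rv: "\<And>n. v (Suc n) = max (- b * a n ^ p * v n) (- a n)"
    and bnd: "\<And>n. a n \<le> M"
  shows "convergent a"
proof -
  have ann: "a n \<ge> 0" for n
  proof (induction n)
    case 0 then show ?case using a0 .
  next
    case (Suc n) then show ?case using ra[of n] rv[of n] by simp
  qed
  have pos_neg: "v (Suc n) \<le> 0" if "v n \<ge> 0" for n
  proof -
    have "b * a n ^ p * v n \<ge> 0" using b ann[of n] that by simp
    then show ?thesis using rv[of n] ann[of n] by simp
  qed
  have neg_pos: "v (Suc n) \<ge> 0" if "v n \<le> 0" for n
  proof -
    have "b * a n ^ p * (- v n) \<ge> 0" using b ann[of n] that by (intro mult_nonneg_nonneg) auto
    then show ?thesis using rv[of n] by simp
  qed
  have sgn: "v (2*k) \<ge> 0 \<and> v (2*k+1) \<le> 0" for k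
  proof (induction k)
    case 0 then show ?case using v0 pos_neg[of 0] by simp
  next
    case (Suc k)
    then have "v (Suc (2*k+1)) \<ge> 0" using neg_pos by blast
    then have "v (2*Suc k) \<ge> 0" by simp
    moreover have "v (Suc (2*Suc k)) \<le> 0" using pos_neg[OF \<open>v (2*Suc k) \<ge> 0\<close>] .
    ultimately show ?case by simp
  qed
  define P where "P k = a (2*k)" for k
  define T where "T k = a (2*k+1)" for k
  have TP: "T k \<le> P k" for k using ra[of "2*k"] sgn[of k] by (simp add: P_def T_def)
  have TP': "T k \<le> P (Suc k)" for k using ra[of "2*k+1"] sgn[of "Suc k"] by (simp add: P_def T_def)
  have Tnn: "T k \<ge> 0" for k using ann by (simp add: T_def)
  have PM: "P k \<le> M" for k using bnd by (simp add: P_def)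
  have Pstep: "P (Suc k) - P k = v (2*k+1) * (1 - b * T k ^ p)" for k
  proof -
    have v2: "v (Suc (2*k+1)) = - b * T k ^ p * v (2*k+1)"
    proof -
      have "- b * T k ^ p * v (2*k+1) \<ge> 0" using b Tnn[of k] sgn[of k]
        by (simp add: mult_nonneg_nonpos)
      then show ?thesis using rv[of "2*k+1"] Tnn[of k] by (simp add: T_def)
    qed
    have "P (Suc k) = T k + v (Suc (2*k+1))" using ra[of "2*k+1"] by (simp add: P_def T_def)
    moreover have "T k = P k + v (2*k+1)" using ra[of "2*k"] by (simp add: P_def T_def)
    ultimately show ?thesis using v2 by (simp add: algebra_simps)
  qed
  have P1: "P (Suc k) \<le> P k" if "b * T k ^ p \<le> 1" for k
  proof -
    have "v (2*k+1) * (1 - b * T k ^ p) \<le> 0" using sgn[of k] that by (simp add: mult_nonpos_nonneg)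
    then show ?thesis using Pstep[of k] by simp
  qed
  have P2: "P (Suc k) \<ge> P k" if "b * T k ^ p \<ge> 1" for k
  proof -
    have "v (2*k+1) * (1 - b * T k ^ p) \<ge> 0" using sgn[of k] that by (simp add: mult_nonpos_nonpos)
    then show ?thesis using Pstep[of k] by simp
  qed
  have Tstep: "T (Suc k) - T k = v (2*k+2) + max (- b * P (Suc k) ^ p * v (2*k+2)) (- P (Suc k))" for k
  proof -
    have "T (Suc k) = P (Suc k) + v (Suc (2*(Suc k)))" using ra[of "2*Suc k"] by (simp add: P_def T_def)
    moreover have "v (Suc (2*(Suc k))) = max (- b * P (Suc k) ^ p * v (2*k+2)) (- P (Suc k))"
      using rv[of "2*Suc k"] by (simp add: P_def)
    moreover have "P (Suc k) = T k + v (2*k+2)" using ra[of "2*k+1"] by (simp add: P_def T_def)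
    ultimately show ?thesis by simp
  qed
  have T1: "T (Suc k) \<le> T k" if "b * P (Suc k) ^ p \<ge> 1" for k
  proof -
    have w: "v (2*k+2) \<ge> 0" using sgn[of "Suc k"] by simp
    have "v (2*k+2) - b * P (Suc k) ^ p * v (2*k+2) \<le> 0"
    proof -
      have "v (2*k+2) * 1 \<le> v (2*k+2) * (b * P (Suc k) ^ p)" using that w by (rule mult_left_mono)
      then show ?thesis by (simp add: algebra_simps)
    qed
    moreover have "v (2*k+2) - P (Suc k) \<le> 0" using ra[of "2*k+1"] Tnn[of k] by (simp add: P_def T_def)
    ultimately have "v (2*k+2) + max (- b * P (Suc k) ^ p * v (2*k+2)) (- P (Suc k)) \<le> 0"
      by (simp add: max_def)
    then show ?thesis using Tstep[of k] by linarith
  qed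
  have T2: "T (Suc k) \<ge> T k" if "b * P (Suc k) ^ p \<le> 1" for k
  proof -
    have w: "v (2*k+2) \<ge> 0" using sgn[of "Suc k"] by simp
    have "v (2*k+2) - b * P (Suc k) ^ p * v (2*k+2) \<ge> 0"
    proof -
      have "v (2*k+2) * (b * P (Suc k) ^ p) \<le> v (2*k+2) * 1" using that w by (rule mult_left_mono)
      then show ?thesis by (simp add: algebra_simps)
    qed
    then have "v (2*k+2) + max (- b * P (Suc k) ^ p * v (2*k+2)) (- P (Suc k)) \<ge> 0"
      by (simp add: max_def)
    then show ?thesis using Tstep[of k] by linarith
  qed
  have fmono: "b * y ^ p \<le> b * z ^ p" if "0 \<le> y" "y \<le> z" for y z :: real
    using b that by (simp add: power_mono)
  have convPT: "convergent P \<and> convergent T"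
  proof (cases "\<exists>k. b * P k ^ p \<le> 1")
    case True
    then obtain k where k: "b * P k ^ p \<le> 1" by blast
    have allL: "b * P j ^ p \<le> 1 \<and> P (Suc j) \<le> P j" if "j \<ge> k" for j
      using that
    proof (induction j rule: dec_induct)
      case base
      have "b * T k ^ p \<le> 1" using fmono[OF Tnn TP, of k] k by linarith
      then show ?case using k P1 by blast
    next
      case (step j)
      have "0 \<le> P (Suc j)" using Tnn[of "Suc j"] TP[of "Suc j"] by linarith
      then have "b * P (Suc j) ^ p \<le> 1" using fmono[of "P (Suc j)" "P j"] step by linarith
      moreover have "b * T (Suc j) ^ p \<le> 1" using fmono[OF Tnn TP, of "Suc j"] calculation by linarith
      ultimately show ?case using P1 by blast
    qed
    have "convergent P" by (rule ev_dec_conv[of k _ 0]) (use allL Tnn TP order_trans in blast)+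
    moreover have "convergent T"
      by (rule ev_inc_conv[of k _ M]) (use allL T2 le_SucI TP PM order_trans in blast)+
    ultimately show ?thesis by blast
  next
    case False
    then have H: "b * P k ^ p > 1" for k by (meson not_le)
    have Tdec: "T (Suc k) \<le> T k" for k using T1 H[of "Suc k"] by simp
    have cT: "convergent T" by (rule ev_dec_conv[of 0 _ 0]) (use Tdec Tnn in auto)
    show ?thesis
    proof (cases "\<exists>k. b * T k ^ p \<le> 1")
      case True
      then obtain k where k: "b * T k ^ p \<le> 1" by blast
      have "b * T j ^ p \<le> 1" if "j \<ge> k" for j
      proof -
        have "T j \<le> T k" using that
        proof (induction j rule: dec_induct)
          case base then show ?case by simp
        next
          case (step j) then show ?case using Tdec[of j] by simp
        qed
        then show ?thesis using fmono[OF Tnn, of j "T k"] k by linarith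
      qed
      then have "convergent P" by (intro ev_dec_conv[of k _ 0]) (use P1 Tnn TP order_trans in blast)+
      then show ?thesis using cT by blast
    next
      case False
      then have "b * T k ^ p \<ge> 1" for k by (meson not_le less_imp_le)
      then have "convergent P" by (intro ev_inc_conv[of 0 _ M]) (use P2 PM in blast)+
      then show ?thesis using cT by blast
    qed
  qed
  then obtain Lp Lt where Lp: "P \<longlonglongrightarrow> Lp" and Lt: "T \<longlonglongrightarrow> Lt" by (auto simp: convergent_def)
  have Lt0: "Lt \<ge> 0" using Lt Tnn by (meson LIMSEQ_le_const)
  have dnn: "Lt \<le> Lp" using Lt Lp TP by (meson LIMSEQ_le)
  have LpS: "(\<lambda>k. P (Suc k)) \<longlonglongrightarrow> Lp" using Lp by (rule LIMSEQ_Suc)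
  have LtS: "(\<lambda>k. T (Suc k)) \<longlonglongrightarrow> Lt" using Lt by (rule LIMSEQ_Suc)
  have eq1: "Lp - Lt = b * Lt ^ p * (Lp - Lt)"
  proof -
    have "\<forall>k. P (Suc k) - T k = b * T k ^ p * (P k - T k)"
    proof
      fix k
      have "T k = P k + v (2*k+1)" using ra[of "2*k"] by (simp add: P_def T_def)
      then show "P (Suc k) - T k = b * T k ^ p * (P k - T k)" using Pstep[of k] by (simp add: algebra_simps)
    qed
    then have h: "(\<lambda>k. P (Suc k) - T k) = (\<lambda>k. b * T k ^ p * (P k - T k))" by (simp add: fun_eq_iff)
    have l1: "(\<lambda>k. P (Suc k) - T k) \<longlonglongrightarrow> Lp - Lt" using LpS Lt by (intro tendsto_intros)
    have l2: "(\<lambda>k. b * T k ^ p * (P k - T k)) \<longlonglongrightarrow> b * Lt ^ p * (Lp - Lt)"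
      using Lp Lt by (intro tendsto_intros)
    show ?thesis using LIMSEQ_unique[OF l1[unfolded h] l2] .
  qed
  have eq2: "Lt - Lp = max (- b * Lp ^ p * (Lp - Lt)) (- Lp)"
  proof -
    have "\<forall>k. T (Suc k) - P (Suc k) = max (- b * P (Suc k) ^ p * (P (Suc k) - T k)) (- P (Suc k))"
    proof
      fix k
      have "T (Suc k) - P (Suc k) = v (Suc (2 * Suc k))" using ra[of "2*Suc k"] by (simp add: P_def T_def)
      also have "\<dots> = max (- b * P (Suc k) ^ p * v (2 * Suc k)) (- P (Suc k))" using rv by (simp add: P_def)
      also have "v (2 * Suc k) = P (Suc k) - T k" using ra[of "2*k+1"] by (simp add: P_def T_def)
      finally show "T (Suc k) - P (Suc k) = max (- b * P (Suc k) ^ p * (P (Suc k) - T k)) (- P (Suc k))" .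
    qed
    then have h: "(\<lambda>k. T (Suc k) - P (Suc k)) = (\<lambda>k. max (- b * P (Suc k) ^ p * (P (Suc k) - T k)) (- P (Suc k)))" by (simp add: fun_eq_iff)
    have l1: "(\<lambda>k. T (Suc k) - P (Suc k)) \<longlonglongrightarrow> Lt - Lp" using LpS LtS by (intro tendsto_intros)
    have l2: "(\<lambda>k. max (- b * P (Suc k) ^ p * (P (Suc k) - T k)) (- P (Suc k))) \<longlonglongrightarrow> max (- b * Lp ^ p * (Lp - Lt)) (- Lp)"
      using LpS Lt by (intro tendsto_intros)
    show ?thesis using LIMSEQ_unique[OF l1[unfolded h] l2] .
  qed
  have "Lp = Lt"
  proof (rule ccontr)
    assume ne: "Lp \<noteq> Lt"
    then have d: "Lp - Lt > 0" using dnn by simp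
    then have bt: "b * Lt ^ p = 1" using eq1 by simp
    have "Lt ^ p < Lp ^ p" using d Lt0 p by (intro power_strict_mono) auto
    then have "b * Lt ^ p < b * Lp ^ p" using b by simp
    then have "b * Lp ^ p > 1" using bt by simp
    then have "1 * (Lp - Lt) < (b * Lp ^ p) * (Lp - Lt)" using d by (intro mult_strict_right_mono)
    then have "- b * Lp ^ p * (Lp - Lt) < - (Lp - Lt)" by simp
    then have "Lt - Lp = - Lp" using eq2 by (simp add: max_def split: if_splits)
    then have "Lt = 0" by simp
    then show False using bt p by (simp add: zero_power)
  qed
  have "a \<longlonglongrightarrow> Lp"
  proof (rule LIMSEQ_even_odd')
    show "(\<lambda>k. a (2*k)) \<longlonglongrightarrow> Lp" using Lp by (simp add: P_def[abs_def])
    show "(\<lambda>k. a (2*k+1)) \<longlonglongrightarrow> Lp" using Lt \<open>Lp = Lt\<close> by (simp add: T_def[abs_def])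
  qed
  then show ?thesis by (auto simp: convergent_def)
qed

lemma core_conv2:
  fixes a v :: "nat \<Rightarrow> real" and b M :: real and p :: nat
  assumes b: "b \<ge> 1" and p: "p \<ge> 1" and a0: "a 0 \<ge> 0"
    and ra: "\<And>n. a (Suc n) = a n + v (Suc n)"
    and rv: "\<And>n. v (Suc n) = max (- b * a n ^ p * v n) (- a n)"
    and bnd: "\<And>n. a n \<le> M"
  shows "convergent a"
proof (cases "v 0 \<ge> 0")
  case True
  show ?thesis by (rule core_conv[OF b p a0 True ra rv bnd])
next
  case False
  have "b * a 0 ^ p * (- v 0) \<ge> 0" using b a0 False by (intro mult_nonneg_nonneg) auto
  then have v1: "v (Suc 0) \<ge> 0" using rv[of 0] by simp
  have a1: "a (Suc 0) \<ge> 0" using ra[of 0] rv[of 0] by simp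
  have "convergent (\<lambda>n. a (Suc n))"
    by (rule core_conv[of b p "\<lambda>n. a (Suc n)" "\<lambda>n. v (Suc n)" M]) (fact b | fact p | fact a1 | fact v1 | rule ra | rule rv | rule bnd)+
  then show ?thesis using convergent_Suc_iff by blast
qed

lemma s_Suc: "mi_s S zeta phi (Suc n) x = mi_s S zeta phi n x + mi_u S zeta phi (Suc n) x"
  by (simp add: mi_s_def)

lemma s_0: "mi_s S zeta phi 0 x = mi_u S zeta phi 0 x"
  by (simp add: mi_s_def)

lemma s_ge: assumes "S > 0" shows "mi_s S zeta phi n x \<ge> - S"
proof (induction n)
  case 0 then show ?case by (simp add: s_0 mi_u_0)
next
  case (Suc n) then show ?case by (simp add: s_Suc mi_u_Suc)
qed

lemma part_c:
  fixes S phi M :: real and zeta :: nat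
  assumes S: "S > 0" and phi: "phi \<le> -1" and bnd: "\<And>n. mi_s S zeta phi n x \<le> M"
  shows "summable (\<lambda>n. mi_u S zeta phi n x)"
proof -
  define a where "a n = 1 + mi_s S zeta phi n x / S" for n
  define v where "v n = mi_u S zeta phi n x / S" for n
  have "convergent a"
  proof (rule core_conv2[of "- phi" "1 + zeta" a v "1 + M / S"])
    show "- phi \<ge> 1" using phi by simp
    show "1 + zeta \<ge> 1" by simp
    show "a 0 \<ge> 0" using s_ge[OF S, of zeta phi 0 x] S by (simp add: a_def field_simps)
    show "a (Suc n) = a n + v (Suc n)" for n by (simp add: a_def v_def s_Suc add_divide_distrib)
    show "v (Suc n) = max (- (- phi) * a n ^ (1 + zeta) * v n) (- a n)" for n
    proof -
      have e1: "phi * (1 + mi_s S zeta phi n x / S) ^ (1 + zeta) * mi_u S zeta phi n x / S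
          = - (- phi) * a n ^ (1 + zeta) * v n" by (simp add: a_def v_def)
      have e2: "(- mi_s S zeta phi n x - S) / S = - a n" using S by (simp add: a_def field_simps)
      have "v (Suc n) = max (phi * (1 + mi_s S zeta phi n x / S) ^ (1 + zeta) * mi_u S zeta phi n x / S)
          ((- mi_s S zeta phi n x - S) / S)" using S by (simp add: v_def mi_u_Suc max_divide_distrib_right)
      also have "\<dots> = max (- (- phi) * a n ^ (1 + zeta) * v n) (- a n)" by (simp only: e1 e2)
      finally show ?thesis .
    qed
    show "a n \<le> 1 + M / S" for n using bnd[of n] S by (simp add: a_def divide_right_mono)
  qed
  then obtain L where "a \<longlonglongrightarrow> L" by (auto simp: convergent_def)
  then have "(\<lambda>n. S * (a n - 1)) \<longlonglongrightarrow> S * (L - 1)" by (intro tendsto_intros)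
  moreover have "(\<lambda>n. S * (a n - 1)) = (\<lambda>n. sum (\<lambda>k. mi_u S zeta phi k x) {..n})"
    using S by (simp add: a_def mi_s_def fun_eq_iff)
  ultimately show ?thesis unfolding summable_iff_convergent' convergent_def by metis
qed

lemma part_a:
  fixes S phi :: real and zeta :: nat
  assumes S: "S > 0" and phi: "phi \<ge> 1"
  shows "\<not> admissible S zeta phi"
proof
  assume "admissible S zeta phi"
  then obtain R where R: "R > 0" and H: "\<And>x. -R < x \<and> x < R \<Longrightarrow> summable (\<lambda>n. mi_u S zeta phi n x)"
    unfolding admissible_def by blast
  define x where "x = R / 2"
  have x: "x > 0" "-R < x" "x < R" using R by (auto simp: x_def)
  have sm: "summable (\<lambda>n. mi_u S zeta phi n x)" using H x by blast
  have inv: "mi_u S zeta phi n x \<ge> x \<and> mi_s S zeta phi n x \<ge> 0" for n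
  proof (induction n)
    case 0 then show ?case using x S by (simp add: s_0 mi_u_0)
  next
    case (Suc n)
    define A where "A = 1 + mi_s S zeta phi n x / S"
    have A1: "A \<ge> 1" using Suc S by (simp add: A_def)
    then have "A ^ (1 + zeta) \<ge> 1" by (rule one_le_power)
    then have pa: "phi * A ^ (1 + zeta) \<ge> 1" using phi
      by (metis mult_mono' mult_1_left zero_le_one)
    have un: "mi_u S zeta phi n x > 0" using Suc x by linarith
    have "mi_u S zeta phi n x \<le> phi * A ^ (1 + zeta) * mi_u S zeta phi n x"
      using mult_right_mono[OF pa less_imp_le[OF un]] by simp
    also have "\<dots> \<le> mi_u S zeta phi (Suc n) x" by (simp add: mi_u_Suc A_def)
    finally have "mi_u S zeta phi (Suc n) x \<ge> x" using Suc by linarith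
    moreover then have "mi_s S zeta phi (Suc n) x \<ge> 0" using Suc x by (simp add: s_Suc)
    ultimately show ?case by blast
  qed
  have "(\<lambda>n. mi_u S zeta phi n x) \<longlonglongrightarrow> 0" using sm by (rule summable_LIMSEQ_zero)
  then have "x \<le> 0" by (rule LIMSEQ_le_const) (use inv in blast)
  then show False using x by simp
qed

lemma abs_max_le: fixes y z :: real assumes "z \<le> 0" shows "\<bar>max y z\<bar> \<le> \<bar>y\<bar>"
  using assms by (auto simp: max_def)

lemma part_b:
  fixes S phi :: real and zeta :: nat
  assumes S: "S > 0" and z: "zeta \<le> 1" and phi: "\<bar>phi\<bar> < 1"
  shows "admissible S zeta phi"
proof -
  define c where "c = \<bar>phi\<bar>"
  define q where "q = (1 + c) / 2"
  define d where "d = (1 - c) / 6"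
  define R where "R = d * (1 - q) * S"
  have c: "0 \<le> c" "c < 1" using phi by (auto simp: c_def)
  have q: "0 \<le> q" "q < 1" using c by (auto simp: q_def)
  have d: "0 < d" "d \<le> 1" using c by (auto simp: d_def)
  have R: "R > 0" using d q S by (simp add: R_def)
  have RS: "R < S"
  proof -
    have "d * (1 - q) < 1 * 1" using d q c by (intro mult_strict_mono) (auto simp: q_def d_def)
    then show ?thesis using S by (simp add: R_def)
  qed
  have key: "c * (1 + d) ^ 2 \<le> q"
  proof -
    have "(1 + d) ^ 2 \<le> 1 + 3 * d"
    proof -
      have "d * d \<le> d * 1" using d by (intro mult_left_mono) auto
      then show ?thesis by (simp add: power2_eq_square algebra_simps)
    qed
    then have "c * (1 + d) ^ 2 \<le> c * (1 + 3 * d)" using c by (intro mult_left_mono) auto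
    also have "\<dots> = c + c * (1 - c) / 2" by (simp add: d_def field_simps)
    also have "\<dots> \<le> c + 1 * (1 - c) / 2"
      using c by (intro add_left_mono divide_right_mono mult_right_mono) auto
    also have "\<dots> = q" by (simp add: q_def field_simps)
    finally show ?thesis .
  qed
  have gs: "(\<Sum>k\<le>n. q ^ k) \<le> 1 / (1 - q)" for n
  proof -
    have "summable (\<lambda>k. q ^ k)" using q by (intro summable_geometric) simp
    then have "(\<Sum>k\<le>n. q ^ k) \<le> (\<Sum>k. q ^ k)" by (rule sum_le_suminf) (use q in auto)
    also have "\<dots> = 1 / (1 - q)" using q by (intro suminf_geometric) simp
    finally show ?thesis .
  qed
  show ?thesis unfolding admissible_def
  proof (intro exI[of _ R] conjI allI impI R)
    fix x :: real assume xR: "-R < x \<and> x < R"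
    let ?u = "\<lambda>n. mi_u S zeta phi n x"
    let ?s = "\<lambda>n. mi_s S zeta phi n x"
    have ax: "\<bar>x\<bar> < R" using xR by auto
    have u0: "?u 0 = x" using xR RS by (simp add: mi_u_0)
    have main: "\<forall>k\<le>n. \<bar>?u k\<bar> \<le> q ^ k * \<bar>x\<bar>" for n
    proof (induction n)
      case 0 then show ?case using u0 by simp
    next
      case (Suc n)
      have "\<bar>?s n\<bar> \<le> (\<Sum>k\<le>n. \<bar>?u k\<bar>)" unfolding mi_s_def by (rule sum_abs)
      also have "\<dots> \<le> (\<Sum>k\<le>n. q ^ k * \<bar>x\<bar>)" using Suc by (intro sum_mono) auto
      also have "\<dots> = (\<Sum>k\<le>n. q ^ k) * \<bar>x\<bar>" by (simp add: sum_distrib_right)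
      also have "\<dots> \<le> 1 / (1 - q) * \<bar>x\<bar>" using gs by (intro mult_right_mono) auto
      also have "\<dots> \<le> 1 / (1 - q) * R" using ax q by (intro mult_left_mono) auto
      also have "\<dots> = d * S" using q by (simp add: R_def)
      finally have sb: "\<bar>?s n\<bar> \<le> d * S" .
      define A where "A = 1 + ?s n / S"
      have "\<bar>A\<bar> \<le> 1 + \<bar>?s n\<bar> / S" using S by (simp add: A_def abs_triangle_ineq[THEN order_trans] abs_divide)
      also have "\<dots> \<le> 1 + d" using sb S by (simp add: divide_le_eq mult.commute)
      finally have Ab: "\<bar>A\<bar> \<le> 1 + d" .
      have "\<bar>A\<bar> ^ (1 + zeta) \<le> (1 + d) ^ (1 + zeta)" using Ab by (intro power_mono) auto
      also have "\<dots> \<le> (1 + d) ^ 2" using z d by (intro power_increasing) auto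
      finally have Ap: "\<bar>A\<bar> ^ (1 + zeta) \<le> (1 + d) ^ 2" .
      have "\<bar>?u (Suc n)\<bar> \<le> \<bar>phi * A ^ (1 + zeta) * ?u n\<bar>"
        unfolding mi_u_Suc A_def by (rule abs_max_le) (use s_ge[OF S, of zeta phi n x] in simp)
      also have "\<dots> = c * \<bar>A\<bar> ^ (1 + zeta) * \<bar>?u n\<bar>" by (simp add: c_def abs_mult power_abs)
      also have "\<dots> \<le> c * (1 + d) ^ 2 * \<bar>?u n\<bar>" using Ap c by (intro mult_right_mono mult_left_mono) auto
      also have "\<dots> \<le> q * \<bar>?u n\<bar>" using key by (intro mult_right_mono) auto
      also have "\<dots> \<le> q * (q ^ n * \<bar>x\<bar>)" using Suc q by (intro mult_left_mono) auto
      finally have "\<bar>?u (Suc n)\<bar> \<le> q ^ Suc n * \<bar>x\<bar>" by simp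
      then show ?case using Suc by (auto simp: le_Suc_eq)
    qed
    show "summable ?u"
    proof (rule summable_comparison_test)
      show "\<exists>N. \<forall>n\<ge>N. norm (?u n) \<le> \<bar>x\<bar> * q ^ n" using main by (auto simp: mult.commute)
      show "summable (\<lambda>n. \<bar>x\<bar> * q ^ n)" using q by (intro summable_mult summable_geometric) simp
    qed
  qed
qed

theorem theorem4p1:
  fixes S phi :: real and zeta :: nat
  assumes "S > 0" and "zeta \<in> {0, 1}"
  shows "(phi \<ge> 1 \<longrightarrow> \<not> admissible S zeta phi)
       \<and> (-1 < phi \<and> phi < 1 \<longrightarrow> admissible S zeta phi)
       \<and> (phi \<le> -1 \<and> (\<forall>x. bounded (range (\<lambda>n. mi_s S zeta phi n x)))
            \<longrightarrow> admissible S zeta phi)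
       \<and> ((phi \<le> -1 \<longrightarrow> (\<forall>x. bounded (range (\<lambda>n. mi_s S zeta phi n x))))
            \<longrightarrow> (admissible S zeta phi \<longleftrightarrow> phi < 1))"
proof -
  have z: "zeta \<le> 1" using assms(2) by auto
  have A: "phi \<ge> 1 \<Longrightarrow> \<not> admissible S zeta phi" using part_a[OF assms(1)] by blast
  have B: "-1 < phi \<Longrightarrow> phi < 1 \<Longrightarrow> admissible S zeta phi" using part_b[OF assms(1) z] by auto
  have C: "admissible S zeta phi" if p: "phi \<le> -1" and bd: "\<forall>x. bounded (range (\<lambda>n. mi_s S zeta phi n x))"
  proof -
    have "summable (\<lambda>n. mi_u S zeta phi n x)" for x
    proof -
      obtain M where "\<forall>y\<in>range (\<lambda>n. mi_s S zeta phi n x). \<bar>y\<bar> \<le> M" using bd bounded_real by blast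
      then have "mi_s S zeta phi n x \<le> M" for n by (meson abs_ge_self order_trans rangeI)
      then show ?thesis using part_c[OF assms(1) p] by blast
    qed
    then show ?thesis unfolding admissible_def by (intro exI[of _ 1]) auto
  qed
  show ?thesis using A B C by (metis linorder_not_le)
qed

end
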